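(* Let $x\in A^{\mathbb N}$ be an infinite word. If there exists a finite maximal bifix code $X\subset A^+$ of degree $d$ such that $\mathrm{Card}(X\cap F(x))\le d$, then $x$ is ultimately periodic.
   Context: $A$ is a finite alphabet; $F(x)$ is the set of finite factors of $x$. A bifix code is a set of nonempty words none of which is a proper prefix or proper suffix of another; it is maximal if not properly contained in another bifix code of $A^*$. A parse of $w$ with respect to $X$ is a triple $(v,z,u)$ with $w=vzu$, $v$ having no suffix in $X$, $z\in X^*$, $u$ having no prefix in $X$; the degree of $X$ is $\max_{w\in A^*}$ of the number of parses of $w$. An infinite word $a_0a_1\cdots$ is ultimately periodic if for some $n\ge1$, $a_{i+n}=a_i$ for all large $i$. *)

theory Defs
  imports Main "HOL-Library.Sublist"
begin

definition factors :: "(nat \<Rightarrow> 'a) \<Rightarrow> 'a list set" where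
  "factors x = {map x [i..<i + n] | i n. True}"

definition bifix_code :: "'a list set \<Rightarrow> bool" where
  "bifix_code X \<longleftrightarrow> [] \<notin> X \<and>
     (\<forall>u\<in>X. \<forall>v\<in>X. \<not> strict_prefix u v \<and> \<not> strict_suffix u v)"

definition maximal_bifix_code :: "'a list set \<Rightarrow> bool" where
  "maximal_bifix_code X \<longleftrightarrow> bifix_code X \<and>
     (\<forall>Y. bifix_code Y \<and> X \<subseteq> Y \<longrightarrow> Y = X)"

definition star_set :: "'a list set \<Rightarrow> 'a list set" where
  "star_set X = {concat zs | zs. set zs \<subseteq> X}"

definition parses :: "'a list set \<Rightarrow> 'a list \<Rightarrow> ('a list \<times> 'a list \<times> 'a list) set" where
  "parses X w = {(v, z, u). w = v @ z @ u \<and> (\<forall>s. suffix s v \<longrightarrow> s \<notin> X)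
      \<and> z \<in> star_set X \<and> (\<forall>p. prefix p u \<longrightarrow> p \<notin> X)}"

definition has_degree :: "'a list set \<Rightarrow> nat \<Rightarrow> bool" where
  "has_degree X d \<longleftrightarrow> (\<forall>w. card (parses X w) \<le> d) \<and> (\<exists>w. card (parses X w) = d)"

definition ultimately_periodic :: "(nat \<Rightarrow> 'a) \<Rightarrow> bool" where
  "ultimately_periodic x \<longleftrightarrow> (\<exists>n\<ge>1. \<exists>N. \<forall>i\<ge>N. x (i + n) = x i)"

end

theory Submission
  imports Defs
begin


definition Uset :: "'a list set \<Rightarrow> 'a list \<Rightarrow> 'a list set" where
  "Uset X w = {u. suffix u w \<and> (\<forall>p. prefix p u \<longrightarrow> p \<notin> X)}"

lemma Uset_finite: "finite (Uset X w)"
proof -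
  have "Uset X w \<subseteq> set (suffixes w)" by (auto simp: Uset_def)
  thus ?thesis by (rule finite_subset) simp
qed

lemma Nil_Uset: "bifix_code X \<Longrightarrow> [] \<in> Uset X w"
  by (auto simp: Uset_def bifix_code_def)

lemma concat_suffix:
  assumes bf: "bifix_code X"
  shows "set zs \<subseteq> X \<Longrightarrow> set zs' \<subseteq> X \<Longrightarrow> suffix (concat zs) (concat zs')
    \<Longrightarrow> \<exists>ts. set ts \<subseteq> X \<and> concat zs' = concat ts @ concat zs"
proof (induction zs' arbitrary: zs rule: rev_induct)
  case Nil
  then show ?case by (intro exI[of _ "[]"]) auto
next
  case (snoc x' ys')
  show ?case
  proof (cases zs rule: rev_cases)
    case Nil
    then show ?thesis using snoc by (intro exI[of _ "ys' @ [x']"]) auto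
  next
    case (snoc ys x)
    have x: "x \<in> X" and x': "x' \<in> X" using snoc \<open>set zs \<subseteq> X\<close> \<open>set (ys' @ [x']) \<subseteq> X\<close> by auto
    have s: "suffix (concat ys @ x) (concat ys' @ x')" using snoc \<open>suffix (concat zs) (concat (ys' @ [x']))\<close> by simp
    hence s1: "suffix x (concat ys' @ x')" using suffix_appendD by blast
    have s2: "suffix x' (concat ys' @ x')" by (simp add: suffix_def)
    have "x = x'"
    proof (cases "length x \<le> length x'")
      case True
      hence "suffix x x'" using suffix_length_suffix s1 s2 by blast
      thus ?thesis using bf x x' unfolding bifix_code_def strict_suffix_def by blast
    next
      case False
      hence "suffix x' x" using suffix_length_suffix s1 s2 by (metis nat_le_linear)
      thus ?thesis using bf x x' unfolding bifix_code_def strict_suffix_def by blast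
    qed
    hence "suffix (concat ys) (concat ys')" using s by simp
    then obtain ts where "set ts \<subseteq> X" "concat ys' = concat ts @ concat ys"
      using snoc.IH[of ys] \<open>set zs \<subseteq> X\<close> snoc.prems(2) \<open>zs = ys @ [x]\<close> by auto
    then show ?thesis using \<open>zs = ys @ [x]\<close> \<open>x = x'\<close> by (intro exI[of _ ts]) auto
  qed
qed

lemma uniq_aux:
  assumes bf: "bifix_code X" and eq: "v @ z = v' @ z'" and z: "z \<in> star_set X" and z': "z' \<in> star_set X"
    and v: "\<forall>s. suffix s v \<longrightarrow> s \<notin> X" and le: "length z \<le> length z'"
  shows "v = v'"
proof -
  obtain zs where zs: "set zs \<subseteq> X" "z = concat zs" using z by (auto simp: star_set_def)
  obtain zs' where zs': "set zs' \<subseteq> X" "z' = concat zs'" using z' by (auto simp: star_set_def)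
  have "suffix z (v @ z)" by (simp add: suffix_def)
  moreover have "suffix z' (v @ z)" using eq by (simp add: suffix_def)
  ultimately have "suffix z z'" using suffix_length_suffix le by blast
  then obtain ts where ts: "set ts \<subseteq> X" "z' = concat ts @ z"
    using concat_suffix[OF bf zs(1) zs'(1)] zs zs' by auto
  hence vv: "v = v' @ concat ts" using eq by simp
  show ?thesis
  proof (cases ts rule: rev_cases)
    case Nil then show ?thesis using vv by simp
  next
    case (snoc ts0 t)
    hence "t \<in> X" using ts by auto
    moreover have "suffix t v" using vv snoc by (simp add: suffix_def)
    ultimately show ?thesis using v by blast
  qed
qed

lemma uniq:
  assumes bf: "bifix_code X" and eq: "v @ z = v' @ z'" and z: "z \<in> star_set X" and z': "z' \<in> star_set X"
    and v: "\<forall>s. suffix s v \<longrightarrow> s \<notin> X" and v': "\<forall>s. suffix s v' \<longrightarrow> s \<notin> X"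
  shows "v = v'"
proof (cases "length z \<le> length z'")
  case True then show ?thesis using uniq_aux[OF bf eq z z' v] by blast
next
  case False then show ?thesis using uniq_aux[OF bf eq[symmetric] z' z v'] by simp
qed

lemma greedy: "\<exists>v z. s = v @ z \<and> z \<in> star_set X \<and> (\<forall>t. suffix t v \<longrightarrow> t \<notin> X)" if "[] \<notin> X"
proof (induction s rule: length_induct)
  case (1 s)
  show ?case
  proof (cases "\<exists>t. suffix t s \<and> t \<in> X")
    case True
    then obtain t s' where t: "t \<in> X" "s = s' @ t" by (auto simp: suffix_def)
    have "t \<noteq> []" using t that by auto
    hence "length s' < length s" using t by simp
    then obtain v z where vz: "s' = v @ z" "z \<in> star_set X" "\<forall>t. suffix t v \<longrightarrow> t \<notin> X" using 1 by blast
    obtain zs where "set zs \<subseteq> X" "z = concat zs" using vz by (auto simp: star_set_def)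
    hence "z @ t \<in> star_set X" using t unfolding star_set_def by (intro CollectI exI[of _ "zs @ [t]"]) auto
    then show ?thesis using vz t by (intro exI[of _ v] exI[of _ "z @ t"]) auto
  next
    case False
    have "[] \<in> star_set X" unfolding star_set_def by (intro CollectI exI[of _ "[]"]) auto
    then show ?thesis using False by (intro exI[of _ s] exI[of _ "[]"]) auto
  qed
qed

lemma card_parses:
  assumes bf: "bifix_code X"
  shows "card (parses X w) = card (Uset X w)"
proof -
  have "bij_betw (\<lambda>(v,z,u). u) (parses X w) (Uset X w)"
  proof (rule bij_betwI')
    fix p q assume "p \<in> parses X w" "q \<in> parses X w"
    then obtain v z u v' z' u' where p: "p = (v,z,u)" "w = v @ z @ u" "\<forall>s. suffix s v \<longrightarrow> s \<notin> X" "z \<in> star_set X"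
      and q: "q = (v',z',u')" "w = v' @ z' @ u'" "\<forall>s. suffix s v' \<longrightarrow> s \<notin> X" "z' \<in> star_set X"
      unfolding parses_def by auto
    show "((\<lambda>(v,z,u). u) p = (\<lambda>(v,z,u). u) q) = (p = q)"
    proof
      assume "(\<lambda>(v,z,u). u) p = (\<lambda>(v,z,u). u) q"
      hence uu: "u = u'" using p q by simp
      hence e: "v @ z = v' @ z'" using p q by simp
      hence "v = v'" using uniq[OF bf e p(4) q(4) p(3) q(3)] by simp
      thus "p = q" using e uu p q by simp
    qed simp
  next
    fix p assume "p \<in> parses X w"
    thus "(\<lambda>(v,z,u). u) p \<in> Uset X w" unfolding parses_def Uset_def by (auto simp: suffix_def)
  next
    fix u assume "u \<in> Uset X w"
    then obtain s where s: "w = s @ u" "\<forall>p. prefix p u \<longrightarrow> p \<notin> X" unfolding Uset_def suffix_def by auto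
    have "[] \<notin> X" using bf by (simp add: bifix_code_def)
    then obtain v z where "s = v @ z" "z \<in> star_set X" "\<forall>t. suffix t v \<longrightarrow> t \<notin> X" using greedy by blast
    hence "(v,z,u) \<in> parses X w" using s unfolding parses_def by auto
    thus "\<exists>p\<in>parses X w. u = (\<lambda>(v,z,u). u) p" by force
  qed
  thus ?thesis by (rule bij_betw_same_card)
qed


lemma len_le_M: "finite X \<Longrightarrow> p \<in> X \<Longrightarrow> length p \<le> sum length X"
  by (rule member_le_sum) auto

lemma complete:
  assumes bf: "bifix_code X" and fin: "finite X" and deg: "\<forall>w. card (Uset X w) \<le> d"
    and len: "length y > sum length X"
  shows "\<exists>p. prefix p y \<and> p \<in> X"
proof (rule ccontr)
  assume no: "\<not> (\<exists>p. prefix p y \<and> p \<in> X)"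
  define w where "w = concat (replicate d y)"
  define S where "S = (\<lambda>i. concat (replicate i y)) ` {..d}"
  have yne: "length y > 0" using len by linarith
  have inj: "inj_on (\<lambda>i. concat (replicate i y)) {..d}"
  proof (rule inj_onI)
    fix i j assume "concat (replicate i y) = concat (replicate j y)"
    hence "length (concat (replicate i y)) = length (concat (replicate j y))" by simp
    hence "i * length y = j * length y" by (simp add: length_concat sum_list_replicate)
    thus "i = j" using yne by simp
  qed
  have cS: "card S = Suc d" unfolding S_def using card_image[OF inj] by simp
  have "S \<subseteq> Uset X w"
  proof
    fix s assume "s \<in> S"
    then obtain i where i: "i \<le> d" "s = concat (replicate i y)" unfolding S_def by auto
    have "replicate d y = replicate (d - i) y @ replicate i y" using i(1)
      by (metis le_add_diff_inverse2 replicate_add)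
    hence suf: "suffix s w" unfolding w_def i(2) suffix_def by (metis concat_append)
    have "\<forall>p. prefix p s \<longrightarrow> p \<notin> X"
    proof (intro allI impI notI)
      fix p assume pp: "prefix p s" and pX: "p \<in> X"
      show False
      proof (cases i)
        case 0 then show False using pp pX bf i(2) by (simp add: bifix_code_def)
      next
        case (Suc k)
        hence "s = y @ concat (replicate k y)" using i(2) by simp
        hence "prefix y s" by simp
        moreover have "length p \<le> length y" using len_le_M[OF fin pX] len by simp
        ultimately have "prefix p y" using pp prefix_length_prefix by blast
        then show False using no pX by blast
      qed
    qed
    thus "s \<in> Uset X w" using suf unfolding Uset_def by simp
  qed
  hence "card S \<le> card (Uset X w)" using Uset_finite card_mono by blast
  thus False using cS deg by (metis Suc_n_not_le_n le_trans)
qed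

lemma mono1:
  assumes bf: "bifix_code X"
  shows "card (Uset X s) \<le> card (Uset X (s @ [b]))"
proof -
  define f where "f u = (if u @ [b] \<in> X then [] else u @ [b])" for u
  have "f ` Uset X s \<subseteq> Uset X (s @ [b])"
  proof
    fix t assume "t \<in> f ` Uset X s"
    then obtain u where u: "u \<in> Uset X s" "t = f u" by auto
    show "t \<in> Uset X (s @ [b])"
    proof (cases "u @ [b] \<in> X")
      case True
      then show ?thesis using u bf unfolding f_def Uset_def bifix_code_def by auto
    next
      case False
      have "\<forall>p. prefix p (u @ [b]) \<longrightarrow> p \<notin> X"
        using False u(1) unfolding Uset_def by (auto simp: prefix_snoc)
      then show ?thesis using u False unfolding f_def Uset_def by auto
    qed
  qed
  moreover have "inj_on f (Uset X s)"
  proof (rule inj_onI)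
    fix u u' assume uu: "u \<in> Uset X s" "u' \<in> Uset X s" "f u = f u'"
    show "u = u'"
    proof (cases "u @ [b] \<in> X"; cases "u' @ [b] \<in> X")
      assume A: "u @ [b] \<in> X" "u' @ [b] \<in> X"
      have s1: "suffix (u @ [b]) (s @ [b])" "suffix (u' @ [b]) (s @ [b])" using uu unfolding Uset_def by auto
      show "u = u'"
      proof (cases "length u \<le> length u'")
        case True
        hence "suffix (u @ [b]) (u' @ [b])" using s1 suffix_length_suffix by (metis length_append_singleton Suc_le_mono)
        hence "u @ [b] = u' @ [b]" using A bf unfolding bifix_code_def strict_suffix_def by blast
        thus ?thesis by simp
      next
        case False
        hence "suffix (u' @ [b]) (u @ [b])" using s1 suffix_length_suffix by (metis length_append_singleton Suc_le_mono nat_le_linear)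
        hence "u' @ [b] = u @ [b]" using A bf unfolding bifix_code_def strict_suffix_def by blast
        thus ?thesis by simp
      qed
    qed (use uu in \<open>auto simp: f_def split: if_splits\<close>)
  qed
  ultimately show ?thesis using card_inj_on_le Uset_finite by blast
qed

lemma mono:
  assumes bf: "bifix_code X"
  shows "card (Uset X s) \<le> card (Uset X (s @ w))"
proof (induction w rule: rev_induct)
  case Nil then show ?case by simp
next
  case (snoc b ws)
  then show ?case using mono1[OF bf, of "s @ ws" b] by simp
qed



lemma branch:
  fixes G :: "'a list set" and B :: "'a list set"
  assumes finG: "finite G" and Bne: "B \<noteq> {}"
    and br: "\<forall>u\<in>B. \<exists>a b. a \<noteq> b \<and> (\<exists>g\<in>G. prefix (u@[a]) g) \<and> (\<exists>g\<in>G. prefix (u@[b]) g)"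
  shows "card B < card G"
proof -
  obtain r where r: "bij_betw r G {0..<card G}" using ex_bij_betw_finite_nat[OF finG] by blast
  hence rinj: "inj_on r G" by (simp add: bij_betw_def)
  define E where "E p = {g\<in>G. prefix p g}" for p
  define L where "L p = (SOME g. g \<in> E p \<and> (\<forall>g'\<in>E p. r g \<le> r g'))" for p
  have Lp: "L p \<in> E p \<and> (\<forall>g'\<in>E p. r (L p) \<le> r g')" if ne: "E p \<noteq> {}" for p
  proof -
    obtain g0 where "g0 \<in> E p" using ne by blast
    then obtain g where "g \<in> E p \<and> (\<forall>g'. g' \<in> E p \<longrightarrow> r g \<le> r g')"
      using ex_has_least_nat[of "\<lambda>g. g \<in> E p" g0 r] by blast
    hence "g \<in> E p \<and> (\<forall>g'\<in>E p. r g \<le> r g')" by blast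
    thus ?thesis unfolding L_def by (rule someI)
  qed
  have Lu: "g = L p" if "g \<in> E p" "\<forall>g'\<in>E p. r g \<le> r g'" for g p
  proof -
    have "E p \<noteq> {}" using that by auto
    from Lp[OF this] have "r g = r (L p)" using that by (meson le_antisym)
    moreover have "g \<in> G" "L p \<in> G" using that Lp[OF \<open>E p \<noteq> {}\<close>] by (auto simp: E_def)
    ultimately show ?thesis using rinj by (meson inj_onD)
  qed
  have cons: "L q = L p" if "E p \<noteq> {}" "prefix p q" "prefix q (L p)" for p q
  proof -
    have "L p \<in> E q" using Lp[OF that(1)] that(3) by (auto simp: E_def)
    moreover have "\<forall>g'\<in>E q. r (L p) \<le> r g'"
    proof
      fix g' assume "g' \<in> E q"
      hence "g' \<in> E p" using that(2) unfolding E_def using prefix_order.trans by blast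
      thus "r (L p) \<le> r g'" using Lp[OF that(1)] by blast
    qed
    ultimately show ?thesis using Lu[of "L p" q] by simp
  qed
  have EuB: "E u \<noteq> {}" if "u \<in> B" for u
  proof -
    from bspec[OF br that] obtain a g where "g \<in> G" "prefix (u@[a]) g" by blast
    hence "prefix u g" using append_prefixD by blast
    thus ?thesis using \<open>g \<in> G\<close> by (auto simp: E_def)
  qed
  have ch: "\<exists>c. E (u@[c]) \<noteq> {} \<and> \<not> prefix (u@[c]) (L u)" if uB: "u \<in> B" for u
  proof -
    obtain a b where ab: "a \<noteq> b" "\<exists>g\<in>G. prefix (u@[a]) g" "\<exists>g\<in>G. prefix (u@[b]) g"
      using bspec[OF br uB] by blast
    have "\<not> (prefix (u@[a]) (L u) \<and> prefix (u@[b]) (L u))"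
    proof
      assume "prefix (u@[a]) (L u) \<and> prefix (u@[b]) (L u)"
      hence "prefix (u@[a]) (u@[b])" using prefix_length_prefix[of "u@[a]" "L u" "u@[b]"] by simp
      thus False using ab(1) by simp
    qed
    thus ?thesis using ab by (auto simp: E_def)
  qed
  define c where "c u = (SOME c. E (u@[c]) \<noteq> {} \<and> \<not> prefix (u@[c]) (L u))" for u
  have cp: "E (u@[c u]) \<noteq> {} \<and> \<not> prefix (u@[c u]) (L u)" if "u \<in> B" for u
    unfolding c_def using ch[OF that] by (rule someI_ex)
  define f where "f u = L (u @ [c u])" for u
  have fpre: "prefix (u @ [c u]) (f u) \<and> f u \<in> G" if "u \<in> B" for u
  proof -
    have "E (u@[c u]) \<noteq> {}" using cp[OF that] by blast
    from Lp[OF this] have "L (u@[c u]) \<in> E (u@[c u])" by blast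
    thus ?thesis unfolding f_def E_def by simp
  qed
  have Gne: "E [] \<noteq> {}"
  proof -
    obtain u where "u \<in> B" using Bne by blast
    then obtain g where "g \<in> E u" using EuB by blast
    hence "g \<in> E []" by (simp add: E_def)
    thus ?thesis by blast
  qed
  have key: "False" if "u \<in> B" "u' \<in> B" "f u = f u'" "length u < length u'" for u u'
  proof -
    have p1: "prefix (u @ [c u]) (f u)" using fpre[OF that(1)] by blast
    have p2: "prefix u' (f u)" using append_prefixD[of u' "[c u']" "f u'"] fpre[OF that(2)] that(3) by simp
    have "length (u @ [c u]) \<le> length u'" using that(4) by simp
    hence p3: "prefix (u @ [c u]) u'" using prefix_length_prefix[OF p1 p2] by blast
    have "L u' = L (u @ [c u])"
      using cons[of "u @ [c u]" u'] cp[OF that(1)] p2 p3 unfolding f_def by blast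
    thus False using cp[OF that(2)] fpre[OF that(2)] that(3) by (simp add: f_def)
  qed
  have inj: "inj_on f B"
  proof (rule inj_onI)
    fix u u' assume uu: "u \<in> B" "u' \<in> B" "f u = f u'"
    show "u = u'"
    proof (cases "length u = length u'")
      case True
      have h1: "prefix u (f u)" using append_prefixD[of u "[c u]" "f u"] fpre[OF uu(1)] by simp
      have h2: "prefix u' (f u)" using append_prefixD[of u' "[c u']" "f u'"] fpre[OF uu(2)] uu(3) by simp
      have "prefix u u'" using prefix_length_prefix[OF h1 h2] True by simp
      moreover have "prefix u' u" using prefix_length_prefix[OF h2 h1] True by simp
      ultimately have "prefix u u'" "prefix u' u" by auto
      thus ?thesis using prefix_order.antisym by blast
    next
      case False
      then consider "length u < length u'" | "length u' < length u" by linarith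
      thus ?thesis using key[of u u'] key[of u' u] uu by auto
    qed
  qed
  have img: "f ` B \<subseteq> G - {L []}"
  proof
    fix g assume "g \<in> f ` B"
    then obtain u where u: "u \<in> B" "g = f u" by auto
    have "g \<noteq> L []"
    proof
      assume gl: "g = L []"
      have "prefix u (L [])" using append_prefixD[of u "[c u]" "f u"] fpre[OF u(1)] u(2) gl by simp
      hence "L u = L []" using cons[OF Gne, of u] by (simp add: Nil_prefix)
      thus False using cp[OF u(1)] fpre[OF u(1)] u(2) gl by simp
    qed
    thus "g \<in> G - {L []}" using fpre[OF u(1)] u by auto
  qed
  have "card B \<le> card (G - {L []})" using card_inj_on_le[OF inj img] finG by blast
  moreover have "L [] \<in> G" using Lp[OF Gne] by (simp add: E_def)
  ultimately show ?thesis using card_Diff1_less[OF finG] by (meson order_le_less_trans)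
qed



lemma window:
  fixes x :: "nat \<Rightarrow> 'a::finite"
  assumes n1: "n \<ge> 1" and np: "\<not> ultimately_periodic x"
  shows "\<exists>i i'. map x [i..<i+n] = map x [i'..<i'+n] \<and> x (i+n) \<noteq> x (i'+n)"
proof (rule ccontr)
  assume "\<not> ?thesis"
  hence H: "map x [i..<i+n] = map x [i'..<i'+n] \<Longrightarrow> x (i+n) = x (i'+n)" for i i' by blast
  define W where "W i = map x [i..<i+n]" for i
  have step: "W (Suc k) = tl (W k) @ [x (k+n)]" for k
  proof -
    have "[k..<k+n] = k # [Suc k..<k+n]" using n1 by (simp add: upt_conv_Cons)
    moreover have "[Suc k..<Suc k+n] = [Suc k..<k+n] @ [k+n]" using n1 by simp
    ultimately show ?thesis unfolding W_def by simp
  qed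
  have hdW: "hd (W k) = x k" for k
    using n1 unfolding W_def by (simp add: upt_conv_Cons)
  have "range W \<subseteq> {xs. set xs \<subseteq> UNIV \<and> length xs = n}" unfolding W_def by auto
  hence fin: "finite (range W)" using finite_lists_length_eq[OF finite_UNIV, of n]
    by (rule finite_subset)
  have "\<not> inj W"
  proof
    assume "inj W"
    hence "finite (UNIV :: nat set)" using fin finite_imageD by blast
    thus False by simp
  qed
  then obtain i0 j0 where "i0 \<noteq> j0" "W i0 = W j0" unfolding inj_def by blast
  then obtain i j where ij: "i < j" "W i = W j" by (metis linorder_neqE_nat)
  have Wt: "W (i+t) = W (j+t)" for t
  proof (induction t)
    case 0 then show ?case using ij by simp
  next
    case (Suc t)
    have "x (i+t+n) = x (j+t+n)" using H[of "i+t" "j+t"] Suc unfolding W_def by simp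
    then show ?case using step[of "i+t"] step[of "j+t"] Suc by simp
  qed
  have per: "x (k + (j - i)) = x k" if ik: "i \<le> k" for k
  proof -
    obtain t where t: "k = i + t" using le_Suc_ex[OF ik] by blast
    have "x (i+t) = x (j+t)" using hdW[of "i+t"] hdW[of "j+t"] Wt[of t] by simp
    moreover have "k + (j - i) = j + t" using t ij by simp
    ultimately show ?thesis using t by metis
  qed
  have "ultimately_periodic x"
    unfolding ultimately_periodic_def using per ij by (intro exI[of _ "j - i"]) auto
  thus False using np by blast
qed

lemma seg_eq: "map x [j..<j+k] = take k (map x [j..<j+K])" if "k \<le> K"
  using that by (simp add: take_map)

lemma seg_branch:
  fixes x :: "nat \<Rightarrow> 'a"
  assumes comp: "\<forall>y. length y > M \<longrightarrow> (\<exists>p. prefix p y \<and> p \<in> X)"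
    and u: "u \<in> Uset X (map x [i..<i+n])"
  shows "\<exists>g\<in>X \<inter> factors x. prefix (u @ [x (i+n)]) g"
proof -
  define w where "w = map x [i..<i+n]"
  have su: "suffix u w" and nox: "\<forall>p. prefix p u \<longrightarrow> p \<notin> X" using u unfolding Uset_def w_def by auto
  define m where "m = length u"
  have mn: "m \<le> n" using suffix_length_le[OF su] unfolding m_def w_def by simp
  define j where "j = i + (n - m)"
  have jm: "j + m = i + n" using mn unfolding j_def by simp
  obtain zs where "w = zs @ u" using su unfolding suffix_def by blast
  moreover have "length w = n" unfolding w_def by simp
  ultimately have "length zs = n - m" unfolding m_def by simp
  hence "u = drop (n - m) w" using \<open>w = zs @ u\<close> by simp
  hence uj: "u = map x [j..<j+m]" unfolding w_def j_def using mn by (simp add: drop_map)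
  obtain p where p: "prefix p (map x [j..<j+(M+1)])" "p \<in> X" using comp[rule_format, of "map x [j..<j+(M+1)]"] by auto
  define k where "k = length p"
  have kM: "k \<le> M+1" using prefix_length_le[OF p(1)] unfolding k_def by simp
  obtain r where "map x [j..<j+(M+1)] = p @ r" using p(1) prefixE by metis
  hence "take k (map x [j..<j+(M+1)]) = p" unfolding k_def by simp
  hence pk: "p = map x [j..<j+k]" using seg_eq[OF kM, of x j] by argo
  have pf: "p \<in> factors x" unfolding factors_def pk by blast
  have mk: "m < k"
  proof (rule ccontr)
    assume "\<not> m < k"
    hence "p = take k u" using pk uj seg_eq[of k m x j] by simp
    hence "prefix p u" using take_is_prefix by simp
    thus False using nox p(2) by blast
  qed
  have ua: "u @ [x (i+n)] = map x [j..<j+(m+1)]" using uj jm by simp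
  have "prefix (map x [j..<j+(m+1)]) (map x [j..<j+k])"
    using mk seg_eq[of "m+1" k x j] take_is_prefix by simp
  thus ?thesis using ua pk p(2) pf by auto
qed


theorem mainTheorem14:
  fixes x :: "nat \<Rightarrow> 'a::finite" and X :: "'a list set" and d :: nat
  assumes "finite X"
    and "maximal_bifix_code X"
    and "has_degree X d"
    and "card (X \<inter> factors x) \<le> d"
  shows "ultimately_periodic x"
proof (rule ccontr)
  assume np: "\<not> ultimately_periodic x"
  have bf: "bifix_code X" using assms(2) by (simp add: maximal_bifix_code_def)
  have degU: "\<forall>w. card (Uset X w) \<le> d" using assms(3) card_parses[OF bf] by (simp add: has_degree_def)
  obtain w0 where w0: "card (Uset X w0) = d" using assms(3) card_parses[OF bf] by (auto simp: has_degree_def)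
  define M where "M = sum length X"
  have comp: "\<forall>y. length y > M \<longrightarrow> (\<exists>p. prefix p y \<and> p \<in> X)"
    using complete[OF bf assms(1) degU] unfolding M_def by blast
  obtain i i' where ii: "map x [i..<i+(M+1)] = map x [i'..<i'+(M+1)]"
    and ne: "x (i+(M+1)) \<noteq> x (i'+(M+1))" using window[OF _ np, of "M+1"] by auto
  define w where "w = map x [i..<i+(M+1)]"
  have sub: "Uset X (w0 @ w) \<subseteq> Uset X w"
  proof
    fix u assume u: "u \<in> Uset X (w0 @ w)"
    hence su: "suffix u (w0 @ w)" and nox: "\<forall>p. prefix p u \<longrightarrow> p \<notin> X" unfolding Uset_def by auto
    have "length u \<le> M"
    proof (rule ccontr)
      assume "\<not> length u \<le> M"
      hence "M < length u" by simp
      then obtain p where "prefix p u" "p \<in> X" using comp by blast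
      thus False using nox by blast
    qed
    hence "length u \<le> length w" unfolding w_def by simp
    moreover have "suffix w (w0 @ w)" by (simp add: suffix_def)
    ultimately have "suffix u w" using su suffix_length_suffix by blast
    thus "u \<in> Uset X w" using nox unfolding Uset_def by simp
  qed
  have "d \<le> card (Uset X w)"
    using w0 mono[OF bf, of w0 w] card_mono[OF Uset_finite sub] by simp
  moreover have "card (Uset X w) < card (X \<inter> factors x)"
  proof (rule branch)
    show "finite (X \<inter> factors x)" using assms(1) by simp
    show "Uset X w \<noteq> {}" using Nil_Uset[OF bf] by blast
    show "\<forall>u\<in>Uset X w. \<exists>a b. a \<noteq> b \<and> (\<exists>g\<in>X \<inter> factors x. prefix (u @ [a]) g)
          \<and> (\<exists>g\<in>X \<inter> factors x. prefix (u @ [b]) g)"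
    proof
      fix u assume u: "u \<in> Uset X w"
      have "u \<in> Uset X (map x [i'..<i'+(M+1)])" using u ii unfolding w_def by simp
      from seg_branch[OF comp this] seg_branch[OF comp u[unfolded w_def]] ne
      show "\<exists>a b. a \<noteq> b \<and> (\<exists>g\<in>X \<inter> factors x. prefix (u @ [a]) g)
          \<and> (\<exists>g\<in>X \<inter> factors x. prefix (u @ [b]) g)" by blast
    qed
  qed
  ultimately show False using assms(4) by simp
qed


end
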